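(* For every $u\in R$ and every $v\in Z(R)$, one has $u^\eta v^\eta=(uv)^\eta$.
   Context: Let $f\in\mathbb{C}[H]$ be a polynomial. $R=R(f)$ is the associative $\mathbb{C}$-algebra generated by $E,F,H$ with relations $EF-FE=f(H)$, $HE-EH=E$, $HF-FH=-F$; the monomials $F^iH^jE^k$ form a basis of $R$. $Z(R)$ is the center of $R$. Let $R(E)=\mathbb{C}[E]$ and $R(F,H)$ the subalgebra generated by $F,H$. Fix an algebra homomorphism $\eta:R(E)\to\mathbb{C}$ with $\eta(E)\neq0$ and let $R_\eta(E)=\ker\eta$. Then $R=R(F,H)\oplus R\,R_\eta(E)$ as vector spaces; for $u\in R$, $u^\eta$ denotes its $R(F,H)$-component. *)

theory Defs
  imports "HOL-Computational_Algebra.Polynomial"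
begin

text \<open>A complex algebra is modelled as a ring 'a together with a ring homomorphism
  c from the complex numbers into the centre of 'a (scalar multiplication z.u = c z * u).\<close>

definition central_emb :: "(complex \<Rightarrow> 'a::ring_1) \<Rightarrow> bool" where
  "central_emb c \<longleftrightarrow> (\<forall>x y. c (x + y) = c x + c y) \<and> (\<forall>x y. c (x * y) = c x * c y)
     \<and> c 1 = 1 \<and> (\<forall>z u. c z * u = u * c z)"

definition poly_eval_alg :: "(complex \<Rightarrow> 'a::ring_1) \<Rightarrow> complex poly \<Rightarrow> 'a \<Rightarrow> 'a" where
  "poly_eval_alg c p x = (\<Sum>n\<le>degree p. c (coeff p n) * x ^ n)"

definition pbw_sum :: "(complex \<Rightarrow> 'a::ring_1) \<Rightarrow> 'a \<Rightarrow> 'a \<Rightarrow> 'a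
     \<Rightarrow> (nat \<times> nat \<times> nat \<Rightarrow> complex) \<Rightarrow> 'a" where
  "pbw_sum c E F H a = (\<Sum>m\<in>{m. a m \<noteq> 0}.
      (case m of (i, j, k) \<Rightarrow> c (a m) * F ^ i * H ^ j * E ^ k))"

definition pbw_basis :: "(complex \<Rightarrow> 'a::ring_1) \<Rightarrow> 'a \<Rightarrow> 'a \<Rightarrow> 'a \<Rightarrow> bool" where
  "pbw_basis c E F H \<longleftrightarrow>
     (\<forall>u. \<exists>!a. finite {m. a m \<noteq> 0} \<and> u = pbw_sum c E F H a)"

text \<open>('a, c) together with E, F, H is (a copy of) the algebra R(f): the relations hold and
  the PBW monomials form a basis (this determines R(f) up to isomorphism).\<close>
definition is_R_algebra :: "(complex \<Rightarrow> 'a::ring_1) \<Rightarrow> complex poly \<Rightarrow> 'a \<Rightarrow> 'a \<Rightarrow> 'a \<Rightarrow> bool" where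
  "is_R_algebra c f E F H \<longleftrightarrow> central_emb c
     \<and> E * F - F * E = poly_eval_alg c f H
     \<and> H * E - E * H = E
     \<and> H * F - F * H = - F
     \<and> pbw_basis c E F H"

inductive_set gen_subalg :: "(complex \<Rightarrow> 'a::ring_1) \<Rightarrow> 'a set \<Rightarrow> 'a set"
  for c :: "complex \<Rightarrow> 'a" and S :: "'a set" where
  scal: "c z \<in> gen_subalg c S"
| gen: "s \<in> S \<Longrightarrow> s \<in> gen_subalg c S"
| add: "x \<in> gen_subalg c S \<Longrightarrow> y \<in> gen_subalg c S \<Longrightarrow> x + y \<in> gen_subalg c S"
| mult: "x \<in> gen_subalg c S \<Longrightarrow> y \<in> gen_subalg c S \<Longrightarrow> x * y \<in> gen_subalg c S"

definition alg_hom_on :: "(complex \<Rightarrow> 'a::ring_1) \<Rightarrow> 'a set \<Rightarrow> ('a \<Rightarrow> complex) \<Rightarrow> bool" where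
  "alg_hom_on c A \<eta> \<longleftrightarrow> (\<forall>x\<in>A. \<forall>y\<in>A. \<eta> (x + y) = \<eta> x + \<eta> y \<and> \<eta> (x * y) = \<eta> x * \<eta> y)
     \<and> (\<forall>z. \<eta> (c z) = z)"

inductive_set left_mult_span :: "'a::ring_1 set \<Rightarrow> 'a set" for K :: "'a set" where
  zero: "0 \<in> left_mult_span K"
| prod: "s \<in> K \<Longrightarrow> r * s \<in> left_mult_span K"
| add: "x \<in> left_mult_span K \<Longrightarrow> y \<in> left_mult_span K \<Longrightarrow> x + y \<in> left_mult_span K"

definition eta_ker :: "(complex \<Rightarrow> 'a::ring_1) \<Rightarrow> 'a \<Rightarrow> ('a \<Rightarrow> complex) \<Rightarrow> 'a set" where
  "eta_ker c E \<eta> = {x \<in> gen_subalg c {E}. \<eta> x = 0}"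

text \<open>u^eta: the R(F,H)-component of u in R = R(F,H) (+) R R_eta(E).\<close>
definition eta_comp :: "(complex \<Rightarrow> 'a::ring_1) \<Rightarrow> 'a \<Rightarrow> 'a \<Rightarrow> 'a \<Rightarrow> ('a \<Rightarrow> complex) \<Rightarrow> 'a \<Rightarrow> 'a" where
  "eta_comp c E F H \<eta> u =
     (THE x. x \<in> gen_subalg c {F, H} \<and> u - x \<in> left_mult_span (eta_ker c E \<eta>))"

definition ring_center :: "'a::ring_1 set" where
  "ring_center = {v. \<forall>u. u * v = v * u}"

end

theory Submission
  imports Defs
begin

locale Rsetup =
  fixes c :: "complex \<Rightarrow> 'a::ring_1" and E F H :: 'a and \<eta> :: "'a \<Rightarrow> complex"
  assumes cemb: "central_emb c" and HF: "H * F - F * H = - F"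
    and basis: "pbw_basis c E F H" and hom: "alg_hom_on c (gen_subalg c {E}) \<eta>"
begin

lemma c_add: "c (x + y) = c x + c y" using cemb unfolding central_emb_def by blast
lemma c_mult: "c (x * y) = c x * c y" using cemb unfolding central_emb_def by blast
lemma c_one: "c 1 = 1" using cemb unfolding central_emb_def by blast
lemma c_comm: "c z * u = u * c z" using cemb unfolding central_emb_def by blast
lemma c_zero: "c 0 = 0"
proof -
  have "c (0 + 0) = c 0 + c 0" by (rule c_add)
  then show ?thesis by simp
qed
lemma c_neg: "c (- z) = - c z"
proof -
  have "c (z + - z) = c z + c (- z)" by (rule c_add)
  then show ?thesis using c_zero by (simp add: eq_neg_iff_add_eq_0 add.commute)
qed
lemma c_of_nat: "c (of_nat n) = of_nat n"
  by (induction n) (simp_all add: c_zero c_add c_one)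

lemma eta_c: "\<eta> (c z) = z" using hom unfolding alg_hom_on_def by blast
lemma eta_add: "x \<in> gen_subalg c {E} \<Longrightarrow> y \<in> gen_subalg c {E} \<Longrightarrow> \<eta> (x + y) = \<eta> x + \<eta> y"
  using hom unfolding alg_hom_on_def by blast
lemma eta_mult: "x \<in> gen_subalg c {E} \<Longrightarrow> y \<in> gen_subalg c {E} \<Longrightarrow> \<eta> (x * y) = \<eta> x * \<eta> y"
  using hom unfolding alg_hom_on_def by blast

definition T :: "complex \<Rightarrow> nat \<times> nat \<times> nat \<Rightarrow> 'a" where
  "T z m = (case m of (i, j, k) \<Rightarrow> c z * F ^ i * H ^ j * E ^ k)"

lemma T_zero: "T 0 m = 0" by (auto simp: T_def c_zero split: prod.splits)
lemma T_add: "T (x + y) m = T x m + T y m" by (auto simp: T_def c_add algebra_simps split: prod.splits)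
lemma T_scal: "c w * T z m = T (w * z) m" by (auto simp: T_def c_mult mult.assoc split: prod.splits)

lemma pbw_sum_T: "pbw_sum c E F H a = (\<Sum>m\<in>{m. a m \<noteq> 0}. T (a m) m)"
  unfolding pbw_sum_def T_def by (rule sum.cong) (auto split: prod.splits)

lemma pbw_sum_sup: assumes "finite S" "{m. a m \<noteq> 0} \<subseteq> S"
  shows "pbw_sum c E F H a = (\<Sum>m\<in>S. T (a m) m)"
  unfolding pbw_sum_T using assms by (intro sum.mono_neutral_left) (auto simp: T_zero)

definition coef :: "'a \<Rightarrow> nat \<times> nat \<times> nat \<Rightarrow> complex" where
  "coef u = (THE a. finite {m. a m \<noteq> 0} \<and> u = pbw_sum c E F H a)"

lemma coef_prop: "finite {m. coef u m \<noteq> 0} \<and> u = pbw_sum c E F H (coef u)"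
proof -
  have "\<exists>!a. finite {m. a m \<noteq> 0} \<and> u = pbw_sum c E F H a" using basis unfolding pbw_basis_def by blast
  then show ?thesis unfolding coef_def by (rule theI')
qed

lemma coef_fin: "finite {m. coef u m \<noteq> 0}" using coef_prop by blast
lemma coef_rep: "u = (\<Sum>m\<in>{m. coef u m \<noteq> 0}. T (coef u m) m)"
  using coef_prop pbw_sum_T by metis

lemma coef_unique: assumes "finite {m. a m \<noteq> 0}" "u = pbw_sum c E F H a" shows "coef u = a"
proof -
  have "\<exists>!a. finite {m. a m \<noteq> 0} \<and> u = pbw_sum c E F H a" using basis unfolding pbw_basis_def by blast
  then show ?thesis unfolding coef_def using assms by (intro the1_equality) blast+
qed

lemma coef_add: "coef (x + y) = (\<lambda>m. coef x m + coef y m)"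
proof (rule coef_unique)
  let ?S = "{m. coef x m \<noteq> 0} \<union> {m. coef y m \<noteq> 0}"
  have fS: "finite ?S" using coef_fin by blast
  show "finite {m. coef x m + coef y m \<noteq> 0}" by (rule finite_subset[OF _ fS]) auto
  have "x + y = (\<Sum>m\<in>?S. T (coef x m) m) + (\<Sum>m\<in>?S. T (coef y m) m)"
    using pbw_sum_sup[OF fS, of "coef x"] pbw_sum_sup[OF fS, of "coef y"] coef_prop by auto
  also have "\<dots> = (\<Sum>m\<in>?S. T (coef x m + coef y m) m)" by (simp add: T_add sum.distrib)
  also have "\<dots> = pbw_sum c E F H (\<lambda>m. coef x m + coef y m)"
    by (rule pbw_sum_sup[symmetric, OF fS]) auto
  finally show "x + y = pbw_sum c E F H (\<lambda>m. coef x m + coef y m)" .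
qed

lemma coef_scal: "coef (c z * x) = (\<lambda>m. z * coef x m)"
proof (rule coef_unique)
  let ?S = "{m. coef x m \<noteq> 0}"
  have fS: "finite ?S" using coef_fin by blast
  show "finite {m. z * coef x m \<noteq> 0}" by (rule finite_subset[OF _ fS]) auto
  have "c z * x = c z * (\<Sum>m\<in>?S. T (coef x m) m)" using coef_rep by metis
  also have "\<dots> = (\<Sum>m\<in>?S. T (z * coef x m) m)" by (simp add: sum_distrib_left T_scal)
  also have "\<dots> = pbw_sum c E F H (\<lambda>m. z * coef x m)"
    by (rule pbw_sum_sup[symmetric, OF fS]) auto
  finally show "c z * x = pbw_sum c E F H (\<lambda>m. z * coef x m)" .
qed

lemma coef_T: "coef (T z m0) = (\<lambda>m. if m = m0 then z else 0)"
proof (rule coef_unique)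
  show "finite {m. (if m = m0 then z else 0) \<noteq> 0}" by (rule finite_subset[of _ "{m0}"]) auto
  show "T z m0 = pbw_sum c E F H (\<lambda>m. if m = m0 then z else 0)"
    by (subst pbw_sum_sup[of "{m0}"]) auto
qed

lemma coef_0: "coef 0 = (\<lambda>m. 0)"
  by (rule coef_unique) (auto simp: pbw_sum_def)

definition L :: "(nat \<times> nat \<times> nat \<Rightarrow> complex) \<Rightarrow> 'a \<Rightarrow> complex" where
  "L g u = (\<Sum>m\<in>{m. coef u m \<noteq> 0}. coef u m * g m)"

lemma L_sup: assumes "finite S" "{m. coef u m \<noteq> 0} \<subseteq> S"
  shows "L g u = (\<Sum>m\<in>S. coef u m * g m)"
  unfolding L_def using assms by (intro sum.mono_neutral_left) auto

lemma L_add: "L g (x + y) = L g x + L g y"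
proof -
  let ?S = "{m. coef x m \<noteq> 0} \<union> {m. coef y m \<noteq> 0}"
  have fS: "finite ?S" using coef_fin by blast
  have "L g (x + y) = (\<Sum>m\<in>?S. coef (x + y) m * g m)"
    by (rule L_sup[OF fS]) (auto simp: coef_add)
  also have "\<dots> = (\<Sum>m\<in>?S. coef x m * g m) + (\<Sum>m\<in>?S. coef y m * g m)"
    by (simp add: coef_add sum.distrib distrib_right)
  also have "\<dots> = L g x + L g y"
    using L_sup[OF fS, of x g] L_sup[OF fS, of y g] by auto
  finally show ?thesis .
qed

lemma L_scal: "L g (c z * x) = z * L g x"
proof -
  let ?S = "{m. coef x m \<noteq> 0}"
  have fS: "finite ?S" using coef_fin by blast
  have "L g (c z * x) = (\<Sum>m\<in>?S. coef (c z * x) m * g m)"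
    by (rule L_sup[OF fS]) (auto simp: coef_scal)
  also have "\<dots> = z * L g x" by (simp add: coef_scal L_def sum_distrib_left mult.assoc)
  finally show ?thesis .
qed

lemma L_0: "L g 0 = 0" by (simp add: L_def coef_0)

lemma L_T: "L g (T z m0) = z * g m0"
  by (subst L_sup[of "{m0}"]) (auto simp: coef_T)

lemma L_sum: "finite I \<Longrightarrow> L g (\<Sum>i\<in>I. f i) = (\<Sum>i\<in>I. L g (f i))"
  by (induction I rule: finite_induct) (simp_all add: L_0 L_add)

lemma T_E: "T z (i, j, k) * E = T z (i, j, Suc k)"
  by (simp add: T_def mult.assoc power_commutes)

lemma L_E: assumes g: "\<And>i j k. g (i, j, Suc k) = \<eta> E * g (i, j, k)"
  shows "L g (u * E) = \<eta> E * L g u"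
proof -
  let ?S = "{m. coef u m \<noteq> 0}"
  have fS: "finite ?S" using coef_fin by blast
  have "u * E = (\<Sum>m\<in>?S. T (coef u m) m * E)"
    by (subst coef_rep[of u]) (simp add: sum_distrib_right)
  also have "\<dots> = (\<Sum>m\<in>?S. T (coef u m) (case m of (i, j, k) \<Rightarrow> (i, j, Suc k)))"
    by (rule sum.cong) (auto simp: T_E split: prod.splits)
  finally have "L g (u * E) = (\<Sum>m\<in>?S. coef u m * g (case m of (i, j, k) \<Rightarrow> (i, j, Suc k)))"
    using fS by (simp add: L_sum L_T)
  also have "\<dots> = (\<Sum>m\<in>?S. \<eta> E * (coef u m * g m))"
    by (rule sum.cong) (auto simp: g split: prod.splits)
  also have "\<dots> = \<eta> E * L g u" by (simp add: L_def sum_distrib_left)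
  finally show ?thesis .
qed

lemma L_mult: assumes g: "\<And>i j k. g (i, j, Suc k) = \<eta> E * g (i, j, k)"
  and t: "t \<in> gen_subalg c {E}"
  shows "L g (u * t) = \<eta> t * L g u"
  using t
proof (induction arbitrary: u rule: gen_subalg.induct)
  case (scal z)
  then show ?case by (simp add: eta_c L_scal flip: c_comm)
next
  case (gen s)
  then show ?case using L_E[OF g] by simp
next
  case (add x y)
  then show ?case by (simp add: distrib_left L_add eta_add distrib_right)
next
  case (mult x y)
  then show ?case by (simp add: mult.assoc[symmetric] eta_mult)
qed

lemma B_L: assumes g: "\<And>i j k. g (i, j, Suc k) = \<eta> E * g (i, j, k)"
  and y: "y \<in> left_mult_span (eta_ker c E \<eta>)"
  shows "L g y = 0"
  using y
proof (induction rule: left_mult_span.induct)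
  case zero then show ?case by (simp add: L_0)
next
  case (prod s r)
  then show ?case by (simp add: eta_ker_def L_mult[OF g])
next
  case (add x y) then show ?case by (simp add: L_add)
qed

definition V :: "'a set" where
  "V = {x. \<forall>i j k. 0 < k \<longrightarrow> coef x (i, j, k) = 0}"

lemma V_add: "x \<in> V \<Longrightarrow> y \<in> V \<Longrightarrow> x + y \<in> V" by (simp add: V_def coef_add)
lemma V_scal: "x \<in> V \<Longrightarrow> c z * x \<in> V" by (simp add: V_def coef_scal)
lemma V_0: "0 \<in> V" by (simp add: V_def coef_0)
lemma V_T: "T z (i, j, 0) \<in> V" by (simp add: V_def coef_T)
lemma V_sum: "finite S \<Longrightarrow> (\<And>m. m \<in> S \<Longrightarrow> f m \<in> V) \<Longrightarrow> (\<Sum>m\<in>S. f m) \<in> V"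
  by (induction S rule: finite_induct) (simp_all add: V_0 V_add)

lemma HFi: "H * F ^ i = F ^ i * H - of_nat i * F ^ i"
proof (induction i)
  case 0 then show ?case by simp
next
  case (Suc i)
  have hf: "H * F = F * H - F" using HF by (simp add: algebra_simps eq_neg_iff_add_eq_0)
  have "H * F ^ Suc i = (H * F ^ i) * F" by (simp add: power_commutes mult.assoc)
  also have "\<dots> = F ^ i * (H * F) - of_nat i * F ^ Suc i"
    by (simp add: Suc algebra_simps power_commutes)
  also have "\<dots> = F ^ Suc i * H - of_nat (Suc i) * F ^ Suc i"
    by (simp add: hf algebra_simps power_commutes) (metis mult.assoc power_commutes)
  finally show ?case .
qed


lemma F_T: "F * T z (i, j, k) = T z (Suc i, j, k)"
proof -
  have "F * T z (i, j, k) = (F * c z) * (F ^ i * H ^ j * E ^ k)" by (simp add: T_def mult.assoc)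
  also have "\<dots> = c z * (F * F ^ i) * H ^ j * E ^ k" by (metis c_comm mult.assoc)
  finally show ?thesis by (simp add: T_def)
qed

lemma H_T: "H * T z (i, j, 0) = T z (i, Suc j, 0) + T (- (z * of_nat i)) (i, j, 0)"
proof -
  have "H * T z (i, j, 0) = (H * c z) * (F ^ i * H ^ j)" by (simp add: T_def mult.assoc)
  also have "\<dots> = c z * (H * F ^ i) * H ^ j" by (metis c_comm mult.assoc)
  also have "\<dots> = c z * (F ^ i * H - of_nat i * F ^ i) * H ^ j" by (simp add: HFi)
  also have "\<dots> = c z * F ^ i * H ^ Suc j - c z * of_nat i * F ^ i * H ^ j"
    by (simp add: algebra_simps)
  finally show ?thesis by (simp add: T_def c_neg c_mult c_of_nat)
qed

lemma V_rep: assumes "x \<in> V" "m \<in> {m. coef x m \<noteq> 0}" obtains i j where "m = (i, j, 0)"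
proof -
  obtain i j k where m: "m = (i, j, k)" by (cases m) auto
  have "k = 0" using assms m unfolding V_def by (cases k) auto
  then show ?thesis using m that by blast
qed

lemma V_F: assumes x: "x \<in> V" shows "F * x \<in> V"
proof -
  have "F * x = (\<Sum>m\<in>{m. coef x m \<noteq> 0}. F * T (coef x m) m)"
    by (subst coef_rep[of x]) (simp add: sum_distrib_left)
  also have "\<dots> \<in> V"
  proof (rule V_sum[OF coef_fin])
    fix m assume m: "m \<in> {m. coef x m \<noteq> 0}"
    then obtain i j where "m = (i, j, 0)" using V_rep[OF x] by blast
    then show "F * T (coef x m) m \<in> V" by (simp add: F_T V_T)
  qed
  finally show ?thesis .
qed

lemma V_H: assumes x: "x \<in> V" shows "H * x \<in> V"
proof -
  have "H * x = (\<Sum>m\<in>{m. coef x m \<noteq> 0}. H * T (coef x m) m)"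
    by (subst coef_rep[of x]) (simp add: sum_distrib_left)
  also have "\<dots> \<in> V"
  proof (rule V_sum[OF coef_fin])
    fix m assume m: "m \<in> {m. coef x m \<noteq> 0}"
    then obtain i j where "m = (i, j, 0)" using V_rep[OF x] by blast
    then show "H * T (coef x m) m \<in> V" by (simp add: H_T V_T V_add)
  qed
  finally show ?thesis .
qed

lemma A_V: assumes y: "y \<in> gen_subalg c {F, H}" shows "y \<in> V"
proof -
  have "\<forall>x\<in>V. y * x \<in> V" using y
  proof (induction rule: gen_subalg.induct)
    case (scal z) then show ?case by (simp add: V_scal)
  next
    case (gen s) then show ?case using V_F V_H by auto
  next
    case (add x y) then show ?case by (simp add: distrib_right V_add)
  next
    case (mult x y) then show ?case by (simp add: mult.assoc)
  qed
  moreover have "1 \<in> V" using V_T[of 1 0 0] by (simp add: T_def c_one)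
  ultimately show ?thesis by force
qed

lemma AB_zero: assumes x: "x \<in> gen_subalg c {F, H}" and y: "x \<in> left_mult_span (eta_ker c E \<eta>)"
  shows "x = 0"
proof -
  have xV: "x \<in> V" using A_V[OF x] .
  have "coef x m = 0" for m
  proof -
    obtain i j k where m: "m = (i, j, k)" by (cases m) auto
    show ?thesis
    proof (cases "k = 0")
      case False then show ?thesis using xV m by (simp add: V_def)
    next
      case True
      define g where "g = (\<lambda>(i', j', k'). if i' = i \<and> j' = j then \<eta> E ^ k' else (0::complex))"
      have g: "g (i', j', Suc k') = \<eta> E * g (i', j', k')" for i' j' k' by (simp add: g_def)
      have "0 = L g x" using B_L[OF g y] by simp
      also have "\<dots> = (\<Sum>m'\<in>{m. coef x m \<noteq> 0}. if m' = (i, j, 0) then coef x m' else 0)"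
        unfolding L_def
      proof (rule sum.cong)
        fix m' assume "m' \<in> {m. coef x m \<noteq> 0}"
        then obtain i' j' where "m' = (i', j', 0)" using V_rep[OF xV] by blast
        then show "coef x m' * g m' = (if m' = (i, j, 0) then coef x m' else 0)"
          by (auto simp: g_def)
      qed simp
      also have "\<dots> = coef x m" using m True by (simp add: sum.delta[OF coef_fin])
      finally show ?thesis by simp
    qed
  qed
  then have cx: "coef x = (\<lambda>m. 0)" by auto
  have "x = pbw_sum c E F H (coef x)" using coef_prop by blast
  also have "\<dots> = 0" unfolding cx by (simp add: pbw_sum_def)
  finally show ?thesis .
qed


abbreviation "AA \<equiv> gen_subalg c {F, H}"
abbreviation "BB \<equiv> left_mult_span (eta_ker c E \<eta>)"

lemma E_in: "E \<in> gen_subalg c {E}" by (rule gen_subalg.gen) simp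

lemma pow_in: "s \<in> gen_subalg c S \<Longrightarrow> s ^ n \<in> gen_subalg c S"
proof (induction n)
  case 0 have "c 1 \<in> gen_subalg c S" by (rule gen_subalg.scal)
  then show ?case by (simp add: c_one)
next
  case (Suc n) then show ?case by (simp add: gen_subalg.mult)
qed

lemma eta_pow: "\<eta> (E ^ k) = \<eta> E ^ k"
proof (induction k)
  case 0 then show ?case using eta_c[of 1] by (simp add: c_one)
next
  case (Suc k) then show ?case by (simp add: eta_mult E_in pow_in)
qed

lemma B_left: "y \<in> BB \<Longrightarrow> r * y \<in> BB"
proof (induction arbitrary: r rule: left_mult_span.induct)
  case zero then show ?case by (simp add: left_mult_span.zero)
next
  case (prod s r') then show ?case using left_mult_span.prod[of s _ "r * r'"] by (simp add: mult.assoc)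
next
  case (add x y) then show ?case by (simp add: distrib_left left_mult_span.add)
qed

lemma B_diff: assumes "x \<in> BB" "y \<in> BB" shows "x - y \<in> BB"
proof -
  have "(-1) * y \<in> BB" using assms(2) by (rule B_left)
  then have "x + (-1) * y \<in> BB" using assms(1) by (intro left_mult_span.add)
  then show ?thesis by simp
qed

lemma A_diff: assumes "x \<in> AA" "y \<in> AA" shows "x - y \<in> AA"
proof -
  have "c (-1) * y \<in> AA" using assms(2) by (intro gen_subalg.mult gen_subalg.scal)
  then have "x + c (-1) * y \<in> AA" using assms(1) by (intro gen_subalg.add)
  then show ?thesis by (simp add: c_neg c_one)
qed

lemma T_decomp: "\<exists>x\<in>AA. T z m - x \<in> BB"
proof -
  obtain i j k where m: "m = (i, j, k)" by (cases m) auto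
  let ?r = "c z * F ^ i * H ^ j"
  let ?x = "?r * c (\<eta> E ^ k)"
  have xA: "?x \<in> AA"
    by (intro gen_subalg.mult gen_subalg.scal pow_in gen_subalg.gen) auto
  have sE: "E ^ k + c (- (\<eta> E ^ k)) \<in> gen_subalg c {E}"
    by (intro gen_subalg.add pow_in E_in gen_subalg.scal)
  have "\<eta> (E ^ k + c (- (\<eta> E ^ k))) = 0"
    using sE by (simp add: eta_add pow_in E_in gen_subalg.scal eta_pow eta_c)
  then have "?r * (E ^ k + c (- (\<eta> E ^ k))) \<in> BB"
    using sE by (intro left_mult_span.prod) (simp add: eta_ker_def)
  moreover have "T z m - ?x = ?r * (E ^ k + c (- (\<eta> E ^ k)))"
    by (simp add: m T_def c_neg algebra_simps)
  ultimately show ?thesis using xA by metis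
qed

lemma exists_decomp: "\<exists>x\<in>AA. u - x \<in> BB"
proof -
  have "finite S \<Longrightarrow> \<exists>x\<in>AA. (\<Sum>m\<in>S. T (a m) m) - x \<in> BB" for S a
  proof (induction S rule: finite_induct)
    case empty
    have "c 0 \<in> AA" by (rule gen_subalg.scal)
    then have "0 \<in> AA" by (simp add: c_zero)
    moreover have "0 - 0 \<in> BB" by (simp add: left_mult_span.zero)
    ultimately show ?case by (intro bexI[of _ 0]) simp_all
  next
    case (insert m S)
    then obtain x where x: "x \<in> AA" "(\<Sum>m\<in>S. T (a m) m) - x \<in> BB" by blast
    obtain y where y: "y \<in> AA" "T (a m) m - y \<in> BB" using T_decomp by blast
    have eq: "(\<Sum>m\<in>insert m S. T (a m) m) - (y + x) = (T (a m) m - y) + ((\<Sum>m\<in>S. T (a m) m) - x)"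
      using insert by (simp add: algebra_simps)
    have yx: "y + x \<in> AA" using x y by (intro gen_subalg.add)
    have "(T (a m) m - y) + ((\<Sum>m\<in>S. T (a m) m) - x) \<in> BB"
      using x y by (intro left_mult_span.add)
    then have "(\<Sum>m\<in>insert m S. T (a m) m) - (y + x) \<in> BB" by (subst eq)
    with yx show ?case by blast
  qed
  from this[OF coef_fin[of u], of "coef u"] obtain x where
    "x \<in> AA" "(\<Sum>m\<in>{m. coef u m \<noteq> 0}. T (coef u m) m) - x \<in> BB" by blast
  then show ?thesis using coef_rep[of u] by auto
qed

lemma unique_decomp: assumes "x1 \<in> AA" "u - x1 \<in> BB" "x2 \<in> AA" "u - x2 \<in> BB" shows "x1 = x2"
proof -
  have a: "x1 - x2 \<in> AA" using assms(1,3) by (rule A_diff)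
  have "(u - x2) - (u - x1) \<in> BB" using assms(4,2) by (rule B_diff)
  moreover have "(u - x2) - (u - x1) = x1 - x2" by simp
  ultimately have "x1 - x2 \<in> BB" by simp
  then have "x1 - x2 = 0" using a AB_zero by blast
  then show ?thesis by simp
qed

lemma eta_comp_prop: "eta_comp c E F H \<eta> u \<in> AA \<and> u - eta_comp c E F H \<eta> u \<in> BB"
  unfolding eta_comp_def
proof (rule theI')
  obtain x where x: "x \<in> AA" "u - x \<in> BB" using exists_decomp by blast
  show "\<exists>!x. x \<in> AA \<and> u - x \<in> BB"
  proof (rule ex1I[of _ x])
    show "x \<in> AA \<and> u - x \<in> BB" using x by blast
    fix y assume "y \<in> AA \<and> u - y \<in> BB"
    then show "y = x" using x unique_decomp by blast
  qed
qed

lemma eta_comp_eq: assumes "x \<in> AA" "u - x \<in> BB" shows "eta_comp c E F H \<eta> u = x"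
proof -
  have "eta_comp c E F H \<eta> u \<in> AA" "u - eta_comp c E F H \<eta> u \<in> BB" using eta_comp_prop by auto
  then show ?thesis using assms by (intro unique_decomp)
qed

end

theorem mainTheorem16:
  fixes c :: "complex \<Rightarrow> 'a::ring_1" and f :: "complex poly" and E F H :: 'a
    and \<eta> :: "'a \<Rightarrow> complex" and u v :: 'a
  assumes "is_R_algebra c f E F H"
    and "alg_hom_on c (gen_subalg c {E}) \<eta>"
    and "\<eta> E \<noteq> 0"
    and "v \<in> ring_center"
  shows "eta_comp c E F H \<eta> u * eta_comp c E F H \<eta> v = eta_comp c E F H \<eta> (u * v)"
proof -
  interpret Rsetup c E F H \<eta>
    using assms(1,2) unfolding is_R_algebra_def by unfold_locales auto
  define a where "a = eta_comp c E F H \<eta> u"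
  define b where "b = eta_comp c E F H \<eta> v"
  have a: "a \<in> AA" "u - a \<in> BB" using eta_comp_prop a_def by auto
  have b: "b \<in> AA" "v - b \<in> BB" using eta_comp_prop b_def by auto
  have vc: "\<And>w. w * v = v * w" using assms(4) by (simp add: ring_center_def)
  have "u * v - a * b = v * (u - a) + a * (v - b)"
    using vc[of u] vc[of a] by (simp add: algebra_simps)
  also have "\<dots> \<in> BB" using a b by (intro left_mult_span.add B_left)
  finally have "u * v - a * b \<in> BB" .
  moreover have "a * b \<in> AA" using a(1) b(1) by (rule gen_subalg.mult)
  ultimately show ?thesis unfolding a_def b_def by (intro eta_comp_eq[symmetric])
qed

end
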